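(* Let $X$ be a connected finite rack. There exists $N$ (depending on $X$) such that for every integer $n\ge N$ and every $(x_1,\dots,x_n)\in X^n$ such that $x_1,\dots,x_n$ generate $X$, the image $H$ in $S_n$ of the stabilizer $\operatorname{Stab}(x_1,\dots,x_n)\le B_n$ under the homomorphism $B_n\to S_n$ is either $A_n$ or $S_n$. If moreover $X$ is a quandle, then $H=S_n$.
   Context: A rack is a set $X$ with a binary operation $(x,y)\mapsto x^y$ such that for each $y$ the map $x\mapsto x^y$ is a bijection of $X$, and $(z^x)^y=(z^y)^{x^y}$ for all $x,y,z$. It is a quandle if moreover $x^x=x$ for all $x$. A subset $X_0\subseteq X$ is a subrack if $x^y\in X_0$ for all $x,y\in X_0$; elements $x_1,\dots,x_n$ generate $X$ if no proper subrack contains them. A finite rack is connected if the directed graph with vertex set $X$ and edges $(x,x^y)$ for $(x,y)\in X\times X$ is connected. The braid group $B_n$ is generated by $\sigma_1,\dots,\sigma_{n-1}$ with relations $\sigma_i\sigma_j=\sigma_j\sigma_i$ for $|i-j|>1$ and $\sigma_i\sigma_{i+1}\sigma_i=\sigma_{i+1}\sigma_i\sigma_{i+1}$; it acts on $X^n$ from the right by $(c_1,\dots,c_i,c_{i+1},\dots,c_n)^{\sigma_i}=(c_1,\dots,c_{i+1},c_i^{c_{i+1}},\dots,c_n)$. The homomorphism $B_n\to S_n$ sends $\sigma_i$ to the transposition $(i\ i+1)$. *)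

theory Defs
  imports "HOL-Combinatorics.Permutations"
begin

text \<open>A rack on the carrier X with operation op, where op x y stands for x^y.\<close>
definition rack :: "'a set \<Rightarrow> ('a \<Rightarrow> 'a \<Rightarrow> 'a) \<Rightarrow> bool" where
  "rack X op \<longleftrightarrow>
     (\<forall>x\<in>X. \<forall>y\<in>X. op x y \<in> X) \<and>
     (\<forall>y\<in>X. bij_betw (\<lambda>x. op x y) X X) \<and>
     (\<forall>x\<in>X. \<forall>y\<in>X. \<forall>z\<in>X. op (op z x) y = op (op z y) (op x y))"

definition quandle :: "'a set \<Rightarrow> ('a \<Rightarrow> 'a \<Rightarrow> 'a) \<Rightarrow> bool" where
  "quandle X op \<longleftrightarrow> rack X op \<and> (\<forall>x\<in>X. op x x = x)"

definition subrack :: "'a set \<Rightarrow> ('a \<Rightarrow> 'a \<Rightarrow> 'a) \<Rightarrow> 'a set \<Rightarrow> bool" where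
  "subrack X op X0 \<longleftrightarrow> X0 \<subseteq> X \<and> (\<forall>x\<in>X0. \<forall>y\<in>X0. op x y \<in> X0)"

definition rack_generates :: "'a set \<Rightarrow> ('a \<Rightarrow> 'a \<Rightarrow> 'a) \<Rightarrow> 'a set \<Rightarrow> bool" where
  "rack_generates X op S \<longleftrightarrow> S \<subseteq> X \<and> (\<forall>X0. subrack X op X0 \<and> S \<subseteq> X0 \<longrightarrow> X0 = X)"

definition rack_edges :: "'a set \<Rightarrow> ('a \<Rightarrow> 'a \<Rightarrow> 'a) \<Rightarrow> ('a \<times> 'a) set" where
  "rack_edges X op = {(x, op x y) | x y. x \<in> X \<and> y \<in> X}"

definition rack_connected :: "'a set \<Rightarrow> ('a \<Rightarrow> 'a \<Rightarrow> 'a) \<Rightarrow> bool" where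
  "rack_connected X op \<longleftrightarrow>
     (\<forall>x\<in>X. \<forall>z\<in>X. (x, z) \<in> (rack_edges X op \<union> (rack_edges X op)\<inverse>)\<^sup>*)"

text \<open>Braid words: a letter (i, True) is sigma_(i+1), (i, False) its inverse
  (0-based positions: the letter acts on positions i and i+1 of a list of length n,
   valid iff i+1 < n).\<close>
type_synonym braid_word = "(nat \<times> bool) list"

definition braid_word_ok :: "nat \<Rightarrow> braid_word \<Rightarrow> bool" where
  "braid_word_ok n w \<longleftrightarrow> (\<forall>(i, b)\<in>set w. Suc i < n)"

fun braid_letter_act :: "'a set \<Rightarrow> ('a \<Rightarrow> 'a \<Rightarrow> 'a) \<Rightarrow> nat \<times> bool \<Rightarrow> 'a list \<Rightarrow> 'a list" where
  "braid_letter_act X op (i, True) c = c[i := c ! Suc i, Suc i := op (c ! i) (c ! Suc i)]"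
| "braid_letter_act X op (i, False) c =
     c[i := inv_into X (\<lambda>z. op z (c ! i)) (c ! Suc i), Suc i := c ! i]"

definition braid_act :: "'a set \<Rightarrow> ('a \<Rightarrow> 'a \<Rightarrow> 'a) \<Rightarrow> braid_word \<Rightarrow> 'a list \<Rightarrow> 'a list" where
  "braid_act X op w c = fold (braid_letter_act X op) w c"

definition braid_perm :: "braid_word \<Rightarrow> nat \<Rightarrow> nat" where
  "braid_perm w = foldr (\<lambda>(i, b) p. transpose i (Suc i) \<circ> p) w id"

definition stab_image :: "'a set \<Rightarrow> ('a \<Rightarrow> 'a \<Rightarrow> 'a) \<Rightarrow> nat \<Rightarrow> 'a list \<Rightarrow> (nat \<Rightarrow> nat) set" where
  "stab_image X op n c = {braid_perm w | w. braid_word_ok n w \<and> braid_act X op w c = c}"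

definition sym_group :: "nat \<Rightarrow> (nat \<Rightarrow> nat) set" where
  "sym_group n = {p. p permutes {0..<n}}"

definition alt_group :: "nat \<Rightarrow> (nat \<Rightarrow> nat) set" where
  "alt_group n = {p. p permutes {0..<n} \<and> evenperm p}"

end

theory Submission imports Defs "HOL-Combinatorics.Cycles" begin

abbreviation tr :: "nat \<Rightarrow> nat \<Rightarrow> nat \<Rightarrow> nat" where
  "tr a b \<equiv> Transposition.transpose a b"

lemma trans_conj: "bij g \<Longrightarrow> g \<circ> tr a b \<circ> inv g = tr (g a) (g b)"
proof -
  assume g: "bij g"
  have "tr (g a) (g b) \<circ> g = g \<circ> tr (inv g (g a)) (inv g (g b))"
    by (rule transpose_comp_eq[OF g])
  also have "\<dots> = g \<circ> tr a b" using g by (simp add: bij_is_inj)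
  finally have e: "tr (g a) (g b) \<circ> g = g \<circ> tr a b" .
  have gi: "g \<circ> inv g = id" using bij_is_surj[OF g] surj_iff by blast
  have "tr (g a) (g b) = tr (g a) (g b) \<circ> g \<circ> inv g"
    by (simp only: comp_assoc gi comp_id)
  also have "\<dots> = g \<circ> tr a b \<circ> inv g" using e by simp
  finally show ?thesis by simp
qed
lemma id_t1: "1 < b \<Longrightarrow> tr 0 1 \<circ> tr 0 b = tr 1 b \<circ> tr 0 1"
  by (rule ext) (simp add: transpose_def)

lemma id_t2: "1 < a \<Longrightarrow> tr 0 a \<circ> tr 0 1 = (tr 1 a \<circ> tr 0 1) \<circ> (tr 1 a \<circ> tr 0 1)"
  by (rule ext) (simp add: transpose_def)

lemma id_t3: "1 < a \<Longrightarrow> 1 < b \<Longrightarrow> a \<noteq> b \<Longrightarrow>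
   tr 0 a \<circ> tr 0 b = (tr 1 b \<circ> tr 0 1) \<circ> (tr 1 a \<circ> tr 0 1) \<circ> (tr 1 b \<circ> tr 0 1) \<circ> (tr 1 b \<circ> tr 0 1)"
  apply (rule ext)
  subgoal for x
    by (cases "x = 0"; cases "x = 1"; cases "x = a"; cases "x = b") (auto simp: transpose_def)
  done

lemma id_t4: "0 < a \<Longrightarrow> 0 < b \<Longrightarrow> a \<noteq> b \<Longrightarrow> tr a b = tr 0 a \<circ> tr 0 b \<circ> tr 0 a"
  by (rule ext) (simp add: transpose_def)

locale pgrp =
  fixes G :: "(nat \<Rightarrow> nat) set" and n :: nat
  assumes G_id: "id \<in> G" and G_comp: "p \<in> G \<Longrightarrow> q \<in> G \<Longrightarrow> p \<circ> q \<in> G"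
    and G_sub: "G \<subseteq> sym_group n"
begin

lemma all_tr:
  assumes "\<forall>s. 0 < s \<and> s < n \<longrightarrow> tr 0 s \<in> G" "a < n" "b < n"
  shows "tr a b \<in> G"
proof -
  consider "a = b" | "a = 0" "a \<noteq> b" | "b = 0" "a \<noteq> b" | "a \<noteq> 0" "b \<noteq> 0" "a \<noteq> b" by blast
  then show ?thesis
  proof cases
    case 1 then show ?thesis using G_id by simp
  next
    case 2 then show ?thesis using assms by auto
  next
    case 3 then show ?thesis using assms by (auto simp: transpose_commute)
  next
    case 4
    then have "tr a b = tr 0 a \<circ> tr 0 b \<circ> tr 0 a" by (intro id_t4) auto
    moreover have "tr 0 a \<in> G" "tr 0 b \<in> G" using assms 4 by auto
    ultimately show ?thesis using G_comp[OF G_comp[OF \<open>tr 0 a \<in> G\<close> \<open>tr 0 b \<in> G\<close>] \<open>tr 0 a \<in> G\<close>] by (simp only:)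
  qed
qed

lemma sym_sub:
  assumes "\<forall>a b. a < n \<longrightarrow> b < n \<longrightarrow> tr a b \<in> G"
  shows "sym_group n \<subseteq> G"
proof
  fix p assume "p \<in> sym_group n"
  hence p: "p permutes {0..<n}" unfolding sym_group_def by simp
  show "p \<in> G" using p finite_atLeastLessThan
  proof (induction rule: permutes_induct)
    case id then show ?case using G_id by (simp add: id_def)
  next
    case (swap a b p)
    have "a < n" "b < n" using swap.hyps(1,2) by auto
    hence "tr a b \<in> G" using assms by blast
    then show ?case using G_comp[OF _ swap.IH] by blast
  qed
qed

lemma E_sub:
  assumes g: "\<forall>s. 2 \<le> s \<and> s < n \<longrightarrow> tr 1 s \<circ> tr 0 1 \<in> G"
    and ab: "0 < a" "a < n" "0 < b" "b < n"
  shows "tr 0 a \<circ> tr 0 b \<in> G"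
proof -
  have "a = b \<or> (a = 1 \<and> 1 < b) \<or> (1 < a \<and> b = 1) \<or> (1 < a \<and> 1 < b \<and> a \<noteq> b)"
    using ab by auto
  then consider "a = b" | "a = 1" "1 < b" | "1 < a" "b = 1" | "1 < a" "1 < b" "a \<noteq> b" by blast
  then show ?thesis
  proof cases
    case 1 then show ?thesis using G_id by simp
  next
    case 2
    have "2 \<le> b \<and> b < n" using 2 ab by linarith
    hence gb: "tr 1 b \<circ> tr 0 1 \<in> G" using g by blast
    show ?thesis unfolding 2(1) id_t1[OF 2(2)] using gb .
  next
    case 3
    have "2 \<le> a \<and> a < n" using 3 ab by linarith
    hence ga: "tr 1 a \<circ> tr 0 1 \<in> G" using g by blast
    show ?thesis unfolding 3(2) id_t2[OF 3(1)] by (rule G_comp[OF ga ga])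
  next
    case 4
    have "2 \<le> a \<and> a < n" "2 \<le> b \<and> b < n" using 4 ab by linarith+
    hence ga: "tr 1 a \<circ> tr 0 1 \<in> G" and gb: "tr 1 b \<circ> tr 0 1 \<in> G" using g by blast+
    show ?thesis unfolding id_t3[OF 4] by (rule G_comp[OF G_comp[OF G_comp[OF gb ga] gb] gb])
  qed
qed

definition U1 :: "(nat \<Rightarrow> nat) set" where "U1 = {tr 0 x | x. 0 < x \<and> x < n}"

lemma U1_pair: "\<forall>s. 2 \<le> s \<and> s < n \<longrightarrow> tr 1 s \<circ> tr 0 1 \<in> G \<Longrightarrow> p \<in> U1 \<Longrightarrow> q \<in> U1 \<Longrightarrow> p \<circ> q \<in> G"
  unfolding U1_def using E_sub by blast

lemma tr_U:
  assumes "a < n" "b < n" "a \<noteq> b"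
  shows "tr a b \<in> U1 \<or> (\<exists>x y z. x \<in> U1 \<and> y \<in> U1 \<and> z \<in> U1 \<and> tr a b = x \<circ> y \<circ> z)"
proof -
  consider "a = 0" | "b = 0" | "a \<noteq> 0" "b \<noteq> 0" by blast
  then show ?thesis
  proof cases
    case 1 then show ?thesis using assms unfolding U1_def by auto
  next
    case 2 then show ?thesis using assms unfolding U1_def by (auto simp: transpose_commute)
  next
    case 3
    then have "tr a b = tr 0 a \<circ> tr 0 b \<circ> tr 0 a" using assms by (intro id_t4) auto
    then show ?thesis using assms 3 unfolding U1_def by blast
  qed
qed

lemma double_tr:
  assumes g: "\<forall>s. 2 \<le> s \<and> s < n \<longrightarrow> tr 1 s \<circ> tr 0 1 \<in> G"
    and "a < n" "b < n" "a \<noteq> b" "c < n" "d < n" "c \<noteq> d"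
  shows "tr a b \<circ> tr c d \<in> G"
proof -
  note P = U1_pair[OF g]
  from tr_U[OF assms(2-4)] tr_U[OF assms(5-7)] show ?thesis
  proof (elim disjE exE conjE)
    assume "tr a b \<in> U1" "tr c d \<in> U1" then show ?thesis using P by blast
  next
    fix x y z assume h: "tr a b \<in> U1" "x \<in> U1" "y \<in> U1" "z \<in> U1" "tr c d = x \<circ> y \<circ> z"
    have "tr a b \<circ> tr c d = (tr a b \<circ> x) \<circ> (y \<circ> z)" using h(5) by (simp add: comp_assoc)
    then show ?thesis using G_comp[OF P[OF h(1,2)] P[OF h(3,4)]] by (simp only:)
  next
    fix x y z assume h: "tr c d \<in> U1" "x \<in> U1" "y \<in> U1" "z \<in> U1" "tr a b = x \<circ> y \<circ> z"
    have "tr a b \<circ> tr c d = (x \<circ> y) \<circ> (z \<circ> tr c d)" using h(5) by (simp add: comp_assoc)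
    then show ?thesis using G_comp[OF P[OF h(2,3)] P[OF h(4,1)]] by (simp only:)
  next
    fix x y z x' y' z' assume h: "x \<in> U1" "y \<in> U1" "z \<in> U1" "tr a b = x \<circ> y \<circ> z"
      "x' \<in> U1" "y' \<in> U1" "z' \<in> U1" "tr c d = x' \<circ> y' \<circ> z'"
    have "tr a b \<circ> tr c d = (x \<circ> y) \<circ> ((z \<circ> x') \<circ> (y' \<circ> z'))" using h(4,8) by (simp add: comp_assoc)
    then show ?thesis using G_comp[OF P[OF h(1,2)] G_comp[OF P[OF h(3,5)] P[OF h(6,7)]]] by (simp only:)
  qed
qed

lemma alt_sub:
  assumes "\<forall>a b c d. a < n \<longrightarrow> b < n \<longrightarrow> a \<noteq> b \<longrightarrow> c < n \<longrightarrow> d < n \<longrightarrow> c \<noteq> d \<longrightarrow> tr a b \<circ> tr c d \<in> G"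
  shows "alt_group n \<subseteq> G"
proof
  fix p assume "p \<in> alt_group n"
  hence p: "p permutes {0..<n}" "evenperm p" unfolding alt_group_def by auto
  have "(evenperm p \<longrightarrow> p \<in> G) \<and> (\<not> evenperm p \<longrightarrow> (\<forall>a b. a < n \<longrightarrow> b < n \<longrightarrow> a \<noteq> b \<longrightarrow> tr a b \<circ> p \<in> G))"
    using p(1) finite_atLeastLessThan
  proof (induction rule: permutes_induct)
    case id then show ?case using G_id by (simp add: id_def)
  next
    case (swap a b q)
    have pq: "permutation q" using swap.hyps(4) permutes_imp_permutation by blast
    have ev: "evenperm (tr a b \<circ> q) = (\<not> evenperm q)"
      using evenperm_comp[OF permutation_swap_id pq] evenperm_swap[of a b] swap.hyps(3) by simp
    show ?case
    proof (cases "evenperm q")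
      case True
      then have qG: "q \<in> G" using swap.IH by blast
      have "tr c d \<circ> (tr a b \<circ> q) \<in> G" if "c < n" "d < n" "c \<noteq> d" for c d
      proof -
        have "tr c d \<circ> tr a b \<in> G" using assms that swap.hyps(1-3) by auto
        hence "(tr c d \<circ> tr a b) \<circ> q \<in> G" using G_comp[OF _ qG] by blast
        thus ?thesis by (simp add: comp_assoc)
      qed
      then show ?thesis using ev True by blast
    next
      case False
      have ab: "a < n" "b < n" "a \<noteq> b" using swap.hyps(1-3) by auto
      have "tr a b \<circ> q \<in> G" using swap.IH False ab by blast
      then show ?thesis using ev False by blast
    qed
  qed
  then show "p \<in> G" using p(2) by blast
qed

lemma final_alt:
  assumes "alt_group n \<subseteq> G"
  shows "G = alt_group n \<or> G = sym_group n"
proof (cases "G \<subseteq> alt_group n")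
  case True then show ?thesis using assms by blast
next
  case False
  then obtain p where p: "p \<in> G" "p \<notin> alt_group n" by blast
  have pp: "p permutes {0..<n}" using p G_sub unfolding sym_group_def by auto
  have podd: "\<not> evenperm p" using p pp unfolding alt_group_def by auto
  have "sym_group n \<subseteq> G"
  proof
    fix q assume "q \<in> sym_group n"
    hence qp: "q permutes {0..<n}" unfolding sym_group_def by simp
    show "q \<in> G"
    proof (cases "evenperm q")
      case True then show ?thesis using qp assms unfolding alt_group_def by auto
    next
      case False
      have ip: "inv p permutes {0..<n}" using permutes_inv[OF pp] .
      have perm_p: "permutation p" "permutation (inv p)" "permutation q"
        using pp ip qp permutes_imp_permutation by blast+
      have "evenperm (inv p \<circ> q)" using evenperm_comp[OF perm_p(2,3)] evenperm_inv[OF perm_p(1)] podd False by simp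
      moreover have "inv p \<circ> q permutes {0..<n}" using permutes_compose[OF qp ip] .
      ultimately have "inv p \<circ> q \<in> G" using assms unfolding alt_group_def by auto
      hence "p \<circ> (inv p \<circ> q) \<in> G" using G_comp[OF p(1)] by blast
      moreover have "p \<circ> (inv p \<circ> q) = q" using permutes_inv_o(1)[OF pp] by (simp add: comp_assoc[symmetric])
      ultimately show ?thesis by simp
    qed
  qed
  then show ?thesis using G_sub by blast
qed

end

locale rk =
  fixes X :: "'a set" and op :: "'a \<Rightarrow> 'a \<Rightarrow> 'a"
  assumes rack: "rack X op" and fin: "finite X"
begin

lemma cl: "x \<in> X \<Longrightarrow> y \<in> X \<Longrightarrow> op x y \<in> X"
  using rack unfolding rack_def by blast

lemma bijR: "y \<in> X \<Longrightarrow> bij_betw (\<lambda>x. op x y) X X"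
  using rack unfolding rack_def by blast

lemma sd: "x \<in> X \<Longrightarrow> y \<in> X \<Longrightarrow> z \<in> X \<Longrightarrow> op (op z x) y = op (op z y) (op x y)"
  using rack unfolding rack_def by blast

abbreviation Ri :: "'a \<Rightarrow> 'a \<Rightarrow> 'a" where
  "Ri v w \<equiv> inv_into X (\<lambda>z. op z v) w"

lemma Ri_in: "v \<in> X \<Longrightarrow> w \<in> X \<Longrightarrow> Ri v w \<in> X"
  using bijR[of v] by (metis bij_betw_def inv_into_into)

lemma R_Ri: "v \<in> X \<Longrightarrow> w \<in> X \<Longrightarrow> op (Ri v w) v = w"
  using bijR[of v] by (metis bij_betw_def f_inv_into_f)

lemma Ri_R: "v \<in> X \<Longrightarrow> w \<in> X \<Longrightarrow> Ri v (op w v) = w"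
  using bijR[of v] by (metis bij_betw_def inv_into_f_f)

lemma R_inj: "v \<in> X \<Longrightarrow> w \<in> X \<Longrightarrow> u \<in> X \<Longrightarrow> op w v = op u v \<Longrightarrow> w = u"
  by (metis Ri_R)

lemma act_T: "braid_letter_act X op (length P, True) (P @ u # v # Q) = P @ v # op u v # Q"
  by (simp add: list_update_append nth_append)

lemma act_F: "braid_letter_act X op (length P, False) (P @ u # v # Q) = P @ Ri u v # u # Q"
  by (simp add: list_update_append nth_append)

lemma act_T': "length P = i \<Longrightarrow> braid_letter_act X op (i, True) (P @ u # v # Q) = P @ v # op u v # Q"
  using act_T by blast

lemma act_F': "length P = i \<Longrightarrow> braid_letter_act X op (i, False) (P @ u # v # Q) = P @ Ri u v # u # Q"
  using act_F by blast

lemma letter_length[simp]: "length (braid_letter_act X op l c) = length c"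
  by (cases l; cases "snd l") auto

lemma act_length[simp]: "length (braid_act X op w c) = length c"
  unfolding braid_act_def by (induction w arbitrary: c) auto

lemma act_append: "braid_act X op (w1 @ w2) c = braid_act X op w2 (braid_act X op w1 c)"
  unfolding braid_act_def by simp

lemma act_Nil[simp]: "braid_act X op [] c = c"
  unfolding braid_act_def by simp

lemma act_Cons: "braid_act X op (l # w) c = braid_act X op w (braid_letter_act X op l c)"
  unfolding braid_act_def by simp

lemma split_at: "Suc i < length c \<Longrightarrow> \<exists>P u v Q. c = P @ u # v # Q \<and> length P = i"
  by (rule exI[of _ "take i c"], rule exI[of _ "c!i"], rule exI[of _ "c!Suc i"], rule exI[of _ "drop (Suc (Suc i)) c"])
     (simp add: Cons_nth_drop_Suc)

lemma letter_set: 
  assumes "set c \<subseteq> X" "Suc (fst l) < length c"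
  shows "set (braid_letter_act X op l c) \<subseteq> X"
proof -
  obtain i b where l: "l = (i, b)" by (cases l)
  obtain P u v Q where c: "c = P @ u # v # Q" "length P = i" using split_at assms(2) l by fastforce
  have uv: "u \<in> X" "v \<in> X" using assms(1) c by auto
  show ?thesis
  proof (cases b)
    case True
    then show ?thesis using act_T[of P u v Q] c l assms(1) cl[OF uv] by auto
  next
    case False
    then show ?thesis using act_F[of P u v Q] c l assms(1) Ri_in[OF uv] by auto
  qed
qed

lemma act_set:
  assumes "set c \<subseteq> X" "braid_word_ok (length c) w"
  shows "set (braid_act X op w c) \<subseteq> X"
  using assms
proof (induction w arbitrary: c)
  case Nil then show ?case by simp
next
  case (Cons l w)
  have "Suc (fst l) < length c" using Cons.prems(2) unfolding braid_word_ok_def by (cases l) auto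
  hence s: "set (braid_letter_act X op l c) \<subseteq> X" using letter_set Cons.prems(1) by blast
  have "braid_word_ok (length (braid_letter_act X op l c)) w"
    using Cons.prems(2) unfolding braid_word_ok_def by auto
  then show ?case using Cons.IH[OF s] by (simp add: act_Cons)
qed


definition winv :: "braid_word \<Rightarrow> braid_word" where
  "winv w = rev (map (\<lambda>(i, b). (i, \<not> b)) w)"

lemma winv_Cons: "winv (l # w) = winv w @ [(fst l, \<not> snd l)]"
  unfolding winv_def by (cases l) auto

lemma winv_append: "winv (w1 @ w2) = winv w2 @ winv w1"
  unfolding winv_def by simp

lemma winv_ok: "braid_word_ok n (winv w) = braid_word_ok n w"
  unfolding winv_def braid_word_ok_def by auto

lemma ok_append: "braid_word_ok n (w1 @ w2) = (braid_word_ok n w1 \<and> braid_word_ok n w2)"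
  unfolding braid_word_ok_def by auto

lemma letter_inv:
  assumes "set c \<subseteq> X" "Suc i < length c"
  shows "braid_letter_act X op (i, \<not> b) (braid_letter_act X op (i, b) c) = c"
proof -
  obtain P u v Q where c: "c = P @ u # v # Q" "length P = i" using split_at assms(2) by blast
  have uv: "u \<in> X" "v \<in> X" using assms(1) c by auto
  show ?thesis
  proof (cases b)
    case True
    show ?thesis unfolding c(1) c(2)[symmetric] by (simp only: True act_T not_True_eq_False act_F Ri_R uv)
  next
    case False
    show ?thesis unfolding c(1) c(2)[symmetric] by (simp only: False simp_thms act_T not_False_eq_True act_F R_Ri uv)
  qed
qed

lemma act_inv:
  assumes "set c \<subseteq> X" "braid_word_ok (length c) w"
  shows "braid_act X op (winv w) (braid_act X op w c) = c"
  using assms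
proof (induction w arbitrary: c)
  case Nil then show ?case by (simp add: winv_def)
next
  case (Cons l w)
  obtain i b where l: "l = (i, b)" by (cases l)
  have i: "Suc i < length c" using Cons.prems(2) l unfolding braid_word_ok_def by auto
  define c1 where "c1 = braid_letter_act X op l c"
  have s: "set c1 \<subseteq> X" using letter_set Cons.prems(1) i l c1_def by auto
  have ok: "braid_word_ok (length c1) w"
    using Cons.prems(2) unfolding braid_word_ok_def c1_def by auto
  have "braid_act X op (winv (l # w)) (braid_act X op (l # w) c)
      = braid_letter_act X op (i, \<not> b) (braid_act X op (winv w) (braid_act X op w c1))"
    by (simp add: winv_Cons act_append act_Cons c1_def l)
  also have "\<dots> = braid_letter_act X op (i, \<not> b) c1" using Cons.IH[OF s ok] by simp
  also have "\<dots> = c" using letter_inv[OF Cons.prems(1) i] c1_def l by simp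
  finally show ?case .
qed

definition pl :: "nat list \<Rightarrow> nat \<Rightarrow> nat" where
  "pl xs = foldr (\<lambda>i p. Transposition.transpose i (Suc i) \<circ> p) xs id"

lemma pl_Nil[simp]: "pl [] = id" by (simp add: pl_def)
lemma pl_Cons[simp]: "pl (i # xs) = Transposition.transpose i (Suc i) \<circ> pl xs" by (simp add: pl_def)
lemma pl_append: "pl (xs @ ys) = pl xs \<circ> pl ys"
  by (induction xs) auto

lemma bp_pl: "braid_perm w = pl (map fst w)"
  unfolding braid_perm_def pl_def by (induction w) auto

lemma bp_append: "braid_perm (w1 @ w2) = braid_perm w1 \<circ> braid_perm w2"
  by (simp add: bp_pl pl_append)

lemma pl_rev1: "pl xs \<circ> pl (rev xs) = id"
proof (induction xs)
  case Nil then show ?case by simp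
next
  case (Cons a xs)
  have "pl (a # xs) \<circ> pl (rev (a # xs)) = Transposition.transpose a (Suc a) \<circ> (pl xs \<circ> pl (rev xs)) \<circ> Transposition.transpose a (Suc a)"
    by (simp add: pl_append comp_assoc)
  also have "\<dots> = id" unfolding Cons.IH by simp
  finally show ?case .
qed

lemma pl_rev2: "pl (rev xs) \<circ> pl xs = id"
  using pl_rev1[of "rev xs"] by simp

lemma bp_winv: "braid_perm (winv w) = pl (rev (map fst w))"
  unfolding bp_pl winv_def by (simp add: rev_map comp_def case_prod_beta)

lemma inv_bp: "inv (braid_perm w) = braid_perm (winv w)"
  unfolding bp_winv unfolding bp_pl by (rule inv_unique_comp) (simp_all add: pl_rev1 pl_rev2)

lemma pl_permutes: "\<forall>i\<in>set xs. Suc i < n \<Longrightarrow> pl xs permutes {0..<n}"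
  by (induction xs) (auto intro!: permutes_compose permutes_swap_id)

lemma bp_permutes: "braid_word_ok n w \<Longrightarrow> braid_perm w permutes {0..<n}"
  unfolding bp_pl braid_word_ok_def by (rule pl_permutes) auto

abbreviation H :: "'a list \<Rightarrow> (nat \<Rightarrow> nat) set" where
  "H c \<equiv> stab_image X op (length c) c"

lemma H_id: "id \<in> H c"
  unfolding stab_image_def braid_word_ok_def
  by (rule CollectI, rule exI[of _ "[]"]) (simp add: braid_perm_def)

lemma H_comp: "p \<in> H c \<Longrightarrow> q \<in> H c \<Longrightarrow> p \<circ> q \<in> H c"
  unfolding stab_image_def
  by (clarsimp, metis act_append bp_append ok_append)

lemma H_I: "braid_word_ok (length c) w \<Longrightarrow> braid_act X op w c = c \<Longrightarrow> braid_perm w \<in> H c"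
  unfolding stab_image_def by blast

lemma H_transport:
  assumes "set c \<subseteq> X" "braid_word_ok (length c) d" "p \<in> H (braid_act X op d c)"
  shows "braid_perm d \<circ> p \<circ> inv (braid_perm d) \<in> H c"
proof -
  obtain w where w: "braid_word_ok (length c) w" "braid_act X op w (braid_act X op d c) = braid_act X op d c"
     "p = braid_perm w"
    using assms(3) unfolding stab_image_def by auto
  have "braid_word_ok (length c) (d @ w @ winv d)"
    using w(1) assms(2) by (simp add: ok_append winv_ok)
  moreover have "braid_act X op (d @ w @ winv d) c = c"
    using w(2) act_inv[OF assms(1,2)] by (simp add: act_append)
  ultimately have "braid_perm (d @ w @ winv d) \<in> H c" by (rule H_I)
  moreover have "braid_perm (d @ w @ winv d) = braid_perm d \<circ> p \<circ> inv (braid_perm d)"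
    by (simp only: bp_append inv_bp w(3) comp_assoc)
  ultimately show ?thesis by (simp only:)
qed

lemma H_sub: "H c \<subseteq> sym_group (length c)"
  unfolding stab_image_def sym_group_def using bp_permutes by blast


lemma sub_Ri:
  assumes "subrack X op X0" "v \<in> X0" "w \<in> X0"
  shows "Ri v w \<in> X0"
proof -
  have X0: "X0 \<subseteq> X" using assms(1) unfolding subrack_def by blast
  have f0: "finite X0" using X0 fin finite_subset by blast
  have im: "(\<lambda>z. op z v) ` X0 \<subseteq> X0" using assms(1,2) unfolding subrack_def by blast
  have inj: "inj_on (\<lambda>z. op z v) X0"
    using bijR[of v] assms(2) X0 unfolding bij_betw_def by (meson inj_on_subset subsetD)
  have "(\<lambda>z. op z v) ` X0 = X0" using endo_inj_surj[OF f0 im inj] .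
  then obtain u where u: "u \<in> X0" "w = op u v" using assms(3) by blast
  have "u \<in> X" "v \<in> X" using u X0 assms(2) by auto
  hence "Ri v w = u" using u(2) Ri_R by simp
  then show ?thesis using u by simp
qed

lemma gen_letter:
  assumes "set c \<subseteq> X" "Suc i < length c" "rack_generates X op (set c)"
  shows "rack_generates X op (set (braid_letter_act X op (i, b) c))"
  unfolding rack_generates_def
proof (intro conjI allI impI)
  show "set (braid_letter_act X op (i, b) c) \<subseteq> X" using letter_set assms(1,2) by auto
  fix X0 assume A: "subrack X op X0 \<and> set (braid_letter_act X op (i, b) c) \<subseteq> X0"
  obtain P u v Q where c: "c = P @ u # v # Q" "length P = i" using split_at assms(2) by blast
  have uv: "u \<in> X" "v \<in> X" using assms(1) c by auto
  have "set c \<subseteq> X0"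
  proof (cases b)
    case True
    have "braid_letter_act X op (i, b) c = P @ v # op u v # Q"
      using act_T[of P] c True by simp
    hence s: "set P \<subseteq> X0" "set Q \<subseteq> X0" "v \<in> X0" "op u v \<in> X0" using A by auto
    have "u \<in> X0" using sub_Ri[OF conjunct1[OF A] s(3,4)] Ri_R uv by simp
    then show ?thesis using s c by auto
  next
    case False
    have "braid_letter_act X op (i, b) c = P @ Ri u v # u # Q"
      using act_F[of P] c False by simp
    hence s: "set P \<subseteq> X0" "set Q \<subseteq> X0" "u \<in> X0" "Ri u v \<in> X0" using A by auto
    have "op (Ri u v) u \<in> X0" using conjunct1[OF A] s(3,4) unfolding subrack_def by blast
    hence "v \<in> X0" using R_Ri uv by simp
    then show ?thesis using s c by auto
  qed
  then show "X0 = X" using A assms(3) unfolding rack_generates_def by blast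
qed

lemma gen_act:
  assumes "set c \<subseteq> X" "braid_word_ok (length c) w" "rack_generates X op (set c)"
  shows "rack_generates X op (set (braid_act X op w c))"
  using assms
proof (induction w arbitrary: c)
  case Nil then show ?case by simp
next
  case (Cons l w)
  obtain i b where l: "l = (i, b)" by (cases l)
  have i: "Suc i < length c" using Cons.prems(2) l unfolding braid_word_ok_def by auto
  define c1 where "c1 = braid_letter_act X op l c"
  have s: "set c1 \<subseteq> X" using letter_set Cons.prems(1) i l c1_def by auto
  have ok: "braid_word_ok (length c1) w"
    using Cons.prems(2) unfolding braid_word_ok_def c1_def by auto
  have g: "rack_generates X op (set c1)" using gen_letter[OF Cons.prems(1) i Cons.prems(3)] l c1_def by simp
  show ?case using Cons.IH[OF s ok g] by (simp add: act_Cons c1_def)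
qed

lemma funpow_in: "p \<in> X \<Longrightarrow> x \<in> X \<Longrightarrow> ((\<lambda>z. op z x) ^^ k) p \<in> X"
  by (induction k) (auto intro: cl)

lemma one_order: "x \<in> X \<Longrightarrow> \<exists>m>0. \<forall>p\<in>X. ((\<lambda>z. op z x) ^^ m) p = p"
proof -
  assume x: "x \<in> X"
  define f where "f = (\<lambda>z. if z \<in> X then op z x else z)"
  have bf: "bij_betw f X X"
    using bijR[OF x] unfolding f_def by (rule bij_betw_cong[THEN iffD1, rotated]) auto
  have "f permutes X" by (rule bij_imp_permutes[OF bf]) (simp add: f_def)
  hence "permutation f" using fin permutation_permutes by blast
  then obtain m where m: "f ^^ m = id" "m > 0" by (rule permutation_is_nilpotent)
  have eq: "\<forall>p\<in>X. ((\<lambda>z. op z x) ^^ k) p = (f ^^ k) p" for k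
  proof (induction k)
    case 0 then show ?case by simp
  next
    case (Suc k)
    show ?case
    proof
      fix p assume p: "p \<in> X"
      have "((\<lambda>z. op z x) ^^ Suc k) p = op (((\<lambda>z. op z x) ^^ k) p) x" by simp
      also have "\<dots> = f ((f ^^ k) p)" using Suc p funpow_in[OF p x, of k] unfolding f_def by simp
      finally show "((\<lambda>z. op z x) ^^ Suc k) p = (f ^^ Suc k) p" by simp
    qed
  qed
  show ?thesis using m eq by (intro exI[of _ m]) auto
qed

lemma funpow_mult_fix:
  assumes "\<forall>p\<in>X. (g ^^ m) p = p"
  shows "\<forall>p\<in>X. (g ^^ (m * k)) p = p"
proof (induction k)
  case 0 then show ?case by simp
next
  case (Suc k)
  have "(g ^^ (m * Suc k)) p = (g ^^ m) ((g ^^ (m * k)) p)" for p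
    by (simp only: mult_Suc_right funpow_add comp_apply)
  then show ?case using assms Suc by simp
qed

lemma exists_K: "\<exists>K>0. \<forall>x\<in>X. \<forall>p\<in>X. ((\<lambda>z. op z x) ^^ K) p = p"
proof -
  have "\<forall>x\<in>X. \<exists>m. m > 0 \<and> (\<forall>p\<in>X. ((\<lambda>z. op z x) ^^ m) p = p)"
    using one_order by blast
  from bchoice[OF this] obtain m where m: "\<forall>x\<in>X. m x > 0 \<and> (\<forall>p\<in>X. ((\<lambda>z. op z x) ^^ m x) p = p)"
    by blast
  define K where "K = prod m X"
  have "K > 0" unfolding K_def using m by (intro prod_pos) blast
  moreover have "\<forall>x\<in>X. \<forall>p\<in>X. ((\<lambda>z. op z x) ^^ K) p = p"
  proof (intro ballI)
    fix x p assume x: "x \<in> X" and p: "p \<in> X"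
    have "m x dvd K" unfolding K_def by (rule dvd_prodI[OF fin x])
    then obtain k where k: "K = m x * k" by (rule dvdE)
    have "\<forall>p\<in>X. ((\<lambda>z. op z x) ^^ (m x * k)) p = p"
      by (rule funpow_mult_fix) (use m x in blast)
    then show "((\<lambda>z. op z x) ^^ K) p = p" using k p by simp
  qed
  ultimately show ?thesis by blast
qed

lemma Ri_funpow_R: "p \<in> X \<Longrightarrow> x \<in> X \<Longrightarrow> (Ri x ^^ k) (((\<lambda>z. op z x) ^^ k) p) = p"
proof (induction k)
  case 0 then show ?case by simp
next
  case (Suc k)
  have A: "(Ri x ^^ Suc k) q = (Ri x ^^ k) (Ri x q)" for q by (simp only: funpow_Suc_right comp_apply)
  have B: "((\<lambda>z. op z x) ^^ Suc k) p = op (((\<lambda>z. op z x) ^^ k) p) x" by (simp only: funpow.simps comp_apply)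
  have C: "Ri x (op (((\<lambda>z. op z x) ^^ k) p) x) = ((\<lambda>z. op z x) ^^ k) p"
    using Ri_R funpow_in Suc.prems by blast
  show ?case unfolding A B C using Suc by blast
qed

definition mv :: "nat \<Rightarrow> nat \<Rightarrow> braid_word" where
  "mv i j = map (\<lambda>k. (k, True)) (rev [i..<j])"

lemma mv_ok: "j < n \<Longrightarrow> braid_word_ok n (mv i j)"
  unfolding mv_def braid_word_ok_def by auto

lemma mv_Suc: "i \<le> j \<Longrightarrow> mv i (Suc j) = (j, True) # mv i j"
  unfolding mv_def by simp

lemma mv_nth:
  assumes "i \<le> j" "j < length d" "k < length d"
  shows "braid_act X op (mv i j) d ! k =
    (if k < i then d!k else if k = i then d!j else if k \<le> j then op (d!(k-1)) (d!j) else d!k)"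
  using assms
proof (induction j arbitrary: d k rule: dec_induct)
  case base then show ?case by (simp add: mv_def)
next
  case (step j)
  define d1 where "d1 = braid_letter_act X op (j, True) d"
  have l1: "length d1 = length d" by (simp add: d1_def)
  have d1: "d1 ! k' = (if k' = j then d!Suc j else if k' = Suc j then op (d!j) (d!Suc j) else d!k')"
    if "k' < length d" for k'
    using that step.prems unfolding d1_def by (auto simp: nth_list_update)
  have "braid_act X op (mv i (Suc j)) d ! k = braid_act X op (mv i j) d1 ! k"
    using mv_Suc[OF step.hyps(1)] by (simp add: act_Cons d1_def)
  also have "\<dots> = (if k < i then d1!k else if k = i then d1!j else if k \<le> j then op (d1!(k-1)) (d1!j) else d1!k)"
    using step.IH[of d1 k] step.prems l1 by simp
  also have "\<dots> = (if k < i then d!k else if k = i then d!Suc j else if k \<le> Suc j then op (d!(k-1)) (d!Suc j) else d!k)"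
    using step.prems step.hyps by (auto simp: d1)
  finally show ?case .
qed

lemma mv_perm:
  assumes "i \<le> j"
  shows "braid_perm (mv i j) i = j" "k < i \<Longrightarrow> braid_perm (mv i j) k = k"
proof -
  have "braid_perm (mv i j) i = j \<and> (\<forall>k<i. braid_perm (mv i j) k = k)"
    using assms
  proof (induction j rule: dec_induct)
    case base then show ?case by (simp add: mv_def braid_perm_def)
  next
    case (step j)
    have "braid_perm (mv i (Suc j)) = Transposition.transpose j (Suc j) \<circ> braid_perm (mv i j)"
      using mv_Suc[OF step.hyps(1)] by (simp add: braid_perm_def)
    then show ?case using step by auto
  qed
  then show "braid_perm (mv i j) i = j" "k < i \<Longrightarrow> braid_perm (mv i j) k = k" by auto
qed


definition LW :: "nat \<Rightarrow> nat \<Rightarrow> bool \<Rightarrow> braid_word" where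
  "LW K p b = map (\<lambda>k. (k, b)) (rev [p..<p+K])"

definition RW :: "nat \<Rightarrow> nat \<Rightarrow> bool \<Rightarrow> braid_word" where
  "RW K p b = map (\<lambda>k. (k, b)) [p..<p+K]"

lemma LW_Suc: "LW (Suc K) p b = (p + K, b) # LW K p b"
  unfolding LW_def by simp

lemma RW_Suc: "RW (Suc K) p b = (p, b) # RW K (Suc p) b"
  unfolding RW_def by (simp add: upt_rec)

lemma LW_T:
  assumes "length A = p"
  shows "braid_act X op (LW K p True) (A @ replicate K r @ x # B) = A @ x # replicate K (op r x) @ B"
proof (induction K arbitrary: B)
  case 0 then show ?case by (simp add: LW_def)
next
  case (Suc K)
  have e: "A @ replicate (Suc K) r @ x # B = (A @ replicate K r) @ r # x # B"
    by (simp add: replicate_append_same[symmetric])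
  have l: "length (A @ replicate K r) = p + K" using assms by simp
  have "braid_act X op (LW (Suc K) p True) (A @ replicate (Suc K) r @ x # B)
      = braid_act X op (LW K p True) ((A @ replicate K r) @ x # op r x # B)"
    unfolding LW_Suc act_Cons e act_T'[OF l] by simp
  also have "\<dots> = A @ x # replicate K (op r x) @ op r x # B" using Suc[of "op r x # B"] by simp
  also have "\<dots> = A @ x # replicate (Suc K) (op r x) @ B"
    by (simp add: replicate_append_same[symmetric])
  finally show ?case .
qed

lemma LW_F:
  assumes "length A = p"
  shows "braid_act X op (LW K p False) (A @ replicate K r @ x # B) = A @ (Ri r ^^ K) x # replicate K r @ B"
proof (induction K arbitrary: x B)
  case 0 then show ?case by (simp add: LW_def)
next
  case (Suc K)
  have e: "A @ replicate (Suc K) r @ x # B = (A @ replicate K r) @ r # x # B"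
    by (simp add: replicate_append_same[symmetric])
  have l: "length (A @ replicate K r) = p + K" using assms by simp
  have "braid_act X op (LW (Suc K) p False) (A @ replicate (Suc K) r @ x # B)
      = braid_act X op (LW K p False) ((A @ replicate K r) @ Ri r x # r # B)"
    unfolding LW_Suc act_Cons e act_F'[OF l] by simp
  also have "\<dots> = A @ (Ri r ^^ K) (Ri r x) # replicate K r @ r # B" using Suc[of "Ri r x" "r # B"] by simp
  also have "\<dots> = A @ (Ri r ^^ Suc K) x # replicate (Suc K) r @ B"
    by (simp add: replicate_append_same[symmetric] funpow_Suc_right del: funpow.simps)
  finally show ?case .
qed

lemma RW_T:
  "length A = p \<Longrightarrow> braid_act X op (RW K p True) (A @ x # replicate K r @ B)
     = A @ replicate K r @ ((\<lambda>z. op z r) ^^ K) x # B"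
proof (induction K arbitrary: A p x)
  case 0 then show ?case by (simp add: RW_def)
next
  case (Suc K)
  have "braid_act X op (RW (Suc K) p True) (A @ x # replicate (Suc K) r @ B)
      = braid_act X op (RW K (Suc p) True) ((A @ [r]) @ op x r # replicate K r @ B)"
    unfolding RW_Suc act_Cons replicate_Suc append_Cons act_T'[OF Suc.prems] by simp
  also have "\<dots> = (A @ [r]) @ replicate K r @ ((\<lambda>z. op z r) ^^ K) (op x r) # B"
    using Suc.IH[of "A @ [r]" "Suc p"] Suc.prems by simp
  also have "\<dots> = A @ replicate (Suc K) r @ ((\<lambda>z. op z r) ^^ Suc K) x # B"
    by (simp add: funpow_Suc_right del: funpow.simps)
  finally show ?case .
qed

lemma phase1:
  assumes "\<forall>x\<in>set R. (Ri r ^^ K) x = x"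
  shows "braid_act X op (concat (map (\<lambda>q. LW K q False) [length A..<length A + length R]))
           (A @ replicate K r @ R @ Z) = A @ R @ replicate K r @ Z"
  using assms
proof (induction R arbitrary: A)
  case Nil then show ?case by simp
next
  case (Cons x R)
  have u: "[length A..<length A + length (x # R)] = length A # [length (A @ [x])..<length (A @ [x]) + length R]"
    by (simp add: upt_rec)
  have "braid_act X op (concat (map (\<lambda>q. LW K q False) [length A..<length A + length (x # R)]))
           (A @ replicate K r @ (x # R) @ Z)
      = braid_act X op (concat (map (\<lambda>q. LW K q False) [length (A @ [x])..<length (A @ [x]) + length R]))
           (braid_act X op (LW K (length A) False) (A @ replicate K r @ x # R @ Z))"
    unfolding u by (simp add: act_append)
  also have "braid_act X op (LW K (length A) False) (A @ replicate K r @ x # R @ Z) = (A @ [x]) @ replicate K r @ R @ Z"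
    using LW_F[of A "length A" K r x "R @ Z"] Cons.prems by simp
  finally show ?case using Cons.IH[of "A @ [x]"] Cons.prems by simp
qed

lemma phase3:
  assumes "\<forall>x\<in>set R. ((\<lambda>z. op z r) ^^ K) x = x"
  shows "braid_act X op (concat (map (\<lambda>q. RW K q True) (rev [0..<length R])))
           (R @ replicate K r @ Z) = replicate K r @ R @ Z"
  using assms
proof (induction R arbitrary: Z rule: rev_induct)
  case Nil then show ?case by simp
next
  case (snoc x R)
  have "braid_act X op (concat (map (\<lambda>q. RW K q True) (rev [0..<length (R @ [x])])))
           ((R @ [x]) @ replicate K r @ Z)
      = braid_act X op (concat (map (\<lambda>q. RW K q True) (rev [0..<length R])))
           (braid_act X op (RW K (length R) True) (R @ x # replicate K r @ Z))"
    by (simp add: act_append)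
  also have "braid_act X op (RW K (length R) True) (R @ x # replicate K r @ Z) = R @ replicate K r @ x # Z"
    using RW_T[of R "length R" K x r Z] snoc.prems by simp
  finally show ?case using snoc.IH[of "x # Z"] snoc.prems by simp
qed


lemma map_fst_LW: "map fst (LW K q b) = rev [q..<q+K]"
  unfolding LW_def by (simp add: comp_def)

lemma map_fst_RW: "map fst (RW K q b) = [q..<q+K]"
  unfolding RW_def by (simp add: comp_def)

lemma res_step:
  assumes Kp: "\<forall>x\<in>X. \<forall>p\<in>X. ((\<lambda>z. op z x) ^^ K) p = p"
    and y: "y \<in> X" and v: "v \<in> set rest" and rest: "set rest \<subseteq> X"
  shows "\<exists>d. braid_word_ok (K + length rest) d \<and> braid_perm d = id \<and>
           braid_act X op d (replicate K y @ rest) = replicate K (op y v) @ rest"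
proof -
  obtain R1 R2 where r: "rest = R1 @ v # R2" using split_list[OF v] by blast
  define m where "m = length R1"
  define d1 where "d1 = concat (map (\<lambda>q. LW K q False) [0..<m])"
  define d2 where "d2 = LW K m True"
  define d3 where "d3 = concat (map (\<lambda>q. RW K q True) (rev [0..<Suc m]))"
  have vX: "v \<in> X" using v rest by auto
  have yv: "op y v \<in> X" using cl y vX by blast
  have Ri_pow: "(Ri y ^^ K) x = x" if "x \<in> X" for x
    using Ri_funpow_R[OF that y, of K] Kp that y by simp
  have s1: "braid_act X op d1 (replicate K y @ rest) = R1 @ replicate K y @ v # R2"
    using phase1[where R=R1 and r=y and K=K and A="[]" and Z="v # R2"] Ri_pow rest r unfolding d1_def m_def by auto
  have s2: "braid_act X op d2 (R1 @ replicate K y @ v # R2) = R1 @ v # replicate K (op y v) @ R2"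
    unfolding d2_def m_def by (rule LW_T) simp
  have s3: "braid_act X op d3 ((R1 @ [v]) @ replicate K (op y v) @ R2) = replicate K (op y v) @ (R1 @ [v]) @ R2"
    using phase3[where R="R1 @ [v]" and r="op y v" and K=K and Z=R2] Kp yv rest r unfolding d3_def m_def by auto
  have act: "braid_act X op (d1 @ d2 @ d3) (replicate K y @ rest) = replicate K (op y v) @ rest"
    using s1 s2 s3 r by (simp add: act_append)
  define \<alpha> where "\<alpha> = concat (map (\<lambda>q. rev [q..<q+K]) [0..<Suc m])"
  have fa: "map fst (d1 @ d2) = \<alpha>"
    unfolding d1_def d2_def \<alpha>_def by (simp add: map_concat comp_def map_fst_LW)
  have fb: "map fst d3 = rev \<alpha>"
    unfolding d3_def \<alpha>_def by (simp add: map_concat comp_def map_fst_RW rev_concat rev_map)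
  have perm: "braid_perm (d1 @ d2 @ d3) = id"
    using fa fb pl_rev1[of \<alpha>] by (simp add: bp_pl pl_append del: map_append) (metis comp_assoc map_append pl_append)
  have mlt: "m < length rest" using r m_def by simp
  have ok_a: "\<forall>k\<in>set \<alpha>. Suc k < K + length rest"
    unfolding \<alpha>_def using mlt by auto
  have ok: "braid_word_ok (K + length rest) (d1 @ d2 @ d3)"
    unfolding braid_word_ok_def
  proof (intro ballI, clarify)
    fix i b assume "(i, b) \<in> set (d1 @ d2 @ d3)"
    hence "i \<in> set (map fst (d1 @ d2 @ d3))" by force
    moreover have "map fst (d1 @ d2 @ d3) = \<alpha> @ rev \<alpha>" using fa fb by (metis append_assoc map_append)
    ultimately have "i \<in> set (\<alpha> @ rev \<alpha>)" by metis
    hence "i \<in> set \<alpha>" by simp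
    thus "Suc i < K + length rest" using ok_a by blast
  qed
  show ?thesis using ok perm act by blast
qed

definition Ed :: "'a set \<Rightarrow> ('a \<times> 'a) set" where
  "Ed W = {(p, op p v) | p v. p \<in> X \<and> v \<in> W}"

lemma Ed_X: "(a, b) \<in> (Ed W)\<^sup>* \<Longrightarrow> a \<in> X \<Longrightarrow> W \<subseteq> X \<Longrightarrow> b \<in> X"
  by (induction rule: rtrancl_induct) (auto simp: Ed_def intro: cl)

lemma res_star:
  assumes Kp: "\<forall>x\<in>X. \<forall>p\<in>X. ((\<lambda>z. op z x) ^^ K) p = p"
    and rest: "set rest \<subseteq> X" and y: "y \<in> X" and st: "(y, y') \<in> (Ed (set rest))\<^sup>*"
  shows "\<exists>d. braid_word_ok (K + length rest) d \<and> braid_perm d = id \<and>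
           braid_act X op d (replicate K y @ rest) = replicate K y' @ rest"
  using st
proof (induction rule: rtrancl_induct)
  case base
  show ?case by (rule exI[of _ "[]"]) (simp add: braid_word_ok_def braid_perm_def)
next
  case (step y1 y2)
  obtain d where d: "braid_word_ok (K + length rest) d" "braid_perm d = id"
     "braid_act X op d (replicate K y @ rest) = replicate K y1 @ rest" using step.IH by blast
  obtain v where v: "y2 = op y1 v" "v \<in> set rest" "y1 \<in> X" using step.hyps(2) unfolding Ed_def by blast
  obtain e where e: "braid_word_ok (K + length rest) e" "braid_perm e = id"
     "braid_act X op e (replicate K y1 @ rest) = replicate K y2 @ rest"
    using res_step[OF Kp v(3) v(2) rest] v(1) by blast
  show ?case
    by (rule exI[of _ "d @ e"]) (simp add: ok_append bp_append act_append d e)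
qed

lemma all_reach:
  assumes Kp: "\<forall>x\<in>X. \<forall>p\<in>X. ((\<lambda>z. op z x) ^^ K) p = p" and K: "K > 0"
    and W: "W \<subseteq> X" and gen: "rack_generates X op W" and conn: "rack_connected X op"
  shows "\<forall>a\<in>X. \<forall>b\<in>X. (a, b) \<in> (Ed W)\<^sup>*"
proof -
  define A where "A = {x \<in> X. \<forall>p\<in>X. (p, op p x) \<in> (Ed W)\<^sup>*}"
  have WA: "W \<subseteq> A" unfolding A_def Ed_def using W by blast
  have pow: "(p, ((\<lambda>z. op z x) ^^ m) p) \<in> (Ed W)\<^sup>*" if "x \<in> A" "p \<in> X" for x p m
  proof (induction m)
    case 0 then show ?case by simp
  next
    case (Suc m)
    have "((\<lambda>z. op z x) ^^ m) p \<in> X" using funpow_in that unfolding A_def by blast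
    hence "(((\<lambda>z. op z x) ^^ m) p, ((\<lambda>z. op z x) ^^ Suc m) p) \<in> (Ed W)\<^sup>*"
      using that(1) unfolding A_def by simp
    then show ?case using Suc by (rule rtrancl_trans[rotated])
  qed
  have invr: "(p, Ri x p) \<in> (Ed W)\<^sup>*" if "x \<in> A" "p \<in> X" for x p
  proof -
    have x: "x \<in> X" using that unfolding A_def by blast
    have q: "Ri x p \<in> X" using Ri_in x that(2) by blast
    obtain k where k: "K = Suc k" using K by (cases K) auto
    have "Ri x p = ((\<lambda>z. op z x) ^^ K) (Ri x p)" using Kp x q by simp
    also have "\<dots> = ((\<lambda>z. op z x) ^^ k) (op (Ri x p) x)" by (simp only: k funpow_Suc_right comp_apply)
    also have "\<dots> = ((\<lambda>z. op z x) ^^ k) p" using R_Ri x that(2) by simp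
    finally show ?thesis using pow[OF that] by simp
  qed
  have sub: "subrack X op A"
    unfolding subrack_def
  proof (intro conjI ballI)
    show "A \<subseteq> X" unfolding A_def by blast
    fix x z assume x: "x \<in> A" and z: "z \<in> A"
    have xX: "x \<in> X" and zX: "z \<in> X" using x z unfolding A_def by auto
    have "\<forall>p\<in>X. (p, op p (op x z)) \<in> (Ed W)\<^sup>*"
    proof
      fix p assume p: "p \<in> X"
      define p' where "p' = Ri z p"
      have p'X: "p' \<in> X" using Ri_in zX p p'_def by blast
      have 1: "(p, p') \<in> (Ed W)\<^sup>*" using invr[OF z p] p'_def by simp
      have 2: "(p', op p' x) \<in> (Ed W)\<^sup>*" using x p'X unfolding A_def by blast
      have 3: "(op p' x, op (op p' x) z) \<in> (Ed W)\<^sup>*" using z cl[OF p'X xX] unfolding A_def by blast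
      have "op (op p' x) z = op (op p' z) (op x z)" using sd[OF xX zX p'X] .
      also have "\<dots> = op p (op x z)" using R_Ri[OF zX p] p'_def by simp
      finally show "(p, op p (op x z)) \<in> (Ed W)\<^sup>*" using 1 2 3 by (metis rtrancl_trans)
    qed
    then show "op x z \<in> A" unfolding A_def using cl[OF xX zX] by blast
  qed
  have AX: "A = X" using gen sub WA unfolding rack_generates_def by blast
  have edges: "rack_edges X op \<union> (rack_edges X op)\<inverse> \<subseteq> (Ed W)\<^sup>*"
  proof
    fix e assume "e \<in> rack_edges X op \<union> (rack_edges X op)\<inverse>"
    then obtain x y where xy: "x \<in> X" "y \<in> X" "e = (x, op x y) \<or> e = (op x y, x)"
      unfolding rack_edges_def by blast
    have yA: "y \<in> A" using AX xy by simp
    show "e \<in> (Ed W)\<^sup>*"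
    proof (cases "e = (x, op x y)")
      case True
      then show ?thesis using yA xy unfolding A_def by blast
    next
      case False
      hence e: "e = (op x y, x)" using xy by blast
      have "(op x y, Ri y (op x y)) \<in> (Ed W)\<^sup>*" using invr[OF yA cl[OF xy(1,2)]] .
      then show ?thesis using e Ri_R xy by simp
    qed
  qed
  show ?thesis
  proof (intro ballI)
    fix a b assume "a \<in> X" "b \<in> X"
    hence "(a, b) \<in> (rack_edges X op \<union> (rack_edges X op)\<inverse>)\<^sup>*" using conn unfolding rack_connected_def by blast
    then show "(a, b) \<in> (Ed W)\<^sup>*" using rtrancl_subset_rtrancl[OF edges] by blast
  qed
qed


lemma pigeon:
  assumes c: "set c \<subseteq> X" and n: "length c \<ge> card X * M + 1"
  shows "\<exists>y\<in>X. card {k. k < length c \<and> c ! k = y} \<ge> M + 1"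
proof (rule ccontr)
  assume "\<not> ?thesis"
  hence le: "\<forall>y\<in>X. card {k. k < length c \<and> c ! k = y} \<le> M" by auto
  have "{..<length c} \<subseteq> (\<Union>y\<in>X. {k. k < length c \<and> c ! k = y})"
    using c nth_mem by fastforce
  hence "card {..<length c} \<le> card (\<Union>y\<in>X. {k. k < length c \<and> c ! k = y})"
    by (rule card_mono[rotated]) (use fin in auto)
  also have "\<dots> \<le> (\<Sum>y\<in>X. card {k. k < length c \<and> c ! k = y})"
    by (rule card_UN_le[OF fin])
  also have "\<dots> \<le> card X * M" using sum_bounded_above[of X "\<lambda>y. card {k. k < length c \<and> c ! k = y}" M] le
    by simp
  finally show False using n by simp
qed

lemma gather_aux:
  assumes c: "set c \<subseteq> X" and M: "card {k. k < length c \<and> c ! k = y} \<ge> M" and m: "m \<le> M"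
  shows "\<exists>d. braid_word_ok (length c) d \<and> (\<forall>k<m. braid_act X op d c ! k = y) \<and>
             card {k. m \<le> k \<and> k < length c \<and> braid_act X op d c ! k = y} \<ge> M - m"
  using m
proof (induction m)
  case 0
  show ?case by (rule exI[of _ "[]"]) (use M in \<open>simp add: braid_word_ok_def\<close>)
next
  case (Suc m)
  then obtain d where d: "braid_word_ok (length c) d" "\<forall>k<m. braid_act X op d c ! k = y"
    "card {k. m \<le> k \<and> k < length c \<and> braid_act X op d c ! k = y} \<ge> M - m" by auto
  define e where "e = braid_act X op d c"
  define n where "n = length c"
  have le: "length e = n" unfolding e_def n_def by simp
  define S where "S = {k. m \<le> k \<and> k < n \<and> e ! k = y}"
  have fS: "finite S" unfolding S_def by auto
  have cS: "card S \<ge> M - m" using d(3) unfolding S_def e_def n_def .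
  hence "S \<noteq> {}" using Suc.prems by auto
  define j where "j = Min S"
  have jS: "j \<in> S" unfolding j_def using Min_in[OF fS \<open>S \<noteq> {}\<close>] .
  have jmin: "\<forall>k\<in>S. j \<le> k" unfolding j_def using Min_le[OF fS] by blast
  have mj: "m \<le> j" "j < n" "e ! j = y" using jS unfolding S_def by auto
  define e' where "e' = braid_act X op (mv m j) e"
  have le': "length e' = n" unfolding e'_def using le by simp
  have nth': "e' ! k = (if k < m then e!k else if k = m then e!j else if k \<le> j then op (e!(k-1)) (e!j) else e!k)"
    if "k < n" for k
    unfolding e'_def using mv_nth[OF mj(1), of e k] mj(2) le that by simp
  have sub: "S - {j} \<subseteq> {k. Suc m \<le> k \<and> k < n \<and> e' ! k = y}"
  proof
    fix k assume k: "k \<in> S - {j}"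
    hence "j < k" using jmin by force
    moreover have "k < n" "e ! k = y" using k unfolding S_def by auto
    ultimately show "k \<in> {k. Suc m \<le> k \<and> k < n \<and> e' ! k = y}" using nth' mj(1) by auto
  qed
  have "card (S - {j}) = card S - 1" using jS fS by simp
  hence "card {k. Suc m \<le> k \<and> k < n \<and> e' ! k = y} \<ge> M - Suc m"
    using card_mono[OF _ sub] cS by auto
  moreover have "\<forall>k<Suc m. e' ! k = y"
  proof (intro allI impI)
    fix k assume "k < Suc m"
    then show "e' ! k = y" using nth'[of k] d(2) mj e_def by (cases "k = m") auto
  qed
  moreover have "braid_word_ok (length c) (d @ mv m j)" using d(1) mv_ok[OF mj(2)] n_def by (simp add: ok_append)
  moreover have "braid_act X op (d @ mv m j) c = e'" unfolding e'_def e_def by (simp add: act_append)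
  ultimately show ?case unfolding n_def by metis
qed

lemma quandle_idem: "quandle X op \<Longrightarrow> b \<in> X \<Longrightarrow> op b b = b"
  unfolding quandle_def by blast

lemma F2: "x \<in> X \<Longrightarrow> b \<in> X \<Longrightarrow> op x (op b b) = op x b"
proof -
  assume x: "x \<in> X" and b: "b \<in> X"
  define z where "z = Ri b x"
  have z: "z \<in> X" "op z b = x" using Ri_in R_Ri x b z_def by auto
  show ?thesis using sd[OF b b z(1)] z(2) by simp
qed

definition \<omega> :: braid_word where "\<omega> = [(1, True), (0, True), (1, False), (1, False)]"

lemma omega_fix:
  assumes b: "b \<in> X"
  shows "braid_act X op \<omega> (b # b # b # T) = b # b # b # T"
proof -
  have bb: "op b b \<in> X" using cl b by blast
  have r1: "Ri (op b b) (op b b) = b"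
    using Ri_R[OF bb b] F2[OF b b] by simp
  have r2: "Ri b (op b b) = b" using Ri_R[OF b b] .
  have "braid_letter_act X op (1, True) ([b] @ b # b # T) = [b] @ b # op b b # T" by (rule act_T') simp
  hence s1: "braid_letter_act X op (1, True) (b # b # b # T) = [] @ b # b # (op b b # T)" by simp
  have s2: "braid_letter_act X op (0, True) ([] @ b # b # (op b b # T)) = [b] @ op b b # op b b # T"
    using act_T'[of "[]" 0] by simp
  have s3: "braid_letter_act X op (1, False) ([b] @ op b b # op b b # T) = [b] @ b # op b b # T"
    using act_F'[of "[b]" 1] r1 by simp
  have s4: "braid_letter_act X op (1, False) ([b] @ b # op b b # T) = b # b # b # T"
    using act_F'[of "[b]" 1] r2 by simp
  show ?thesis unfolding \<omega>_def act_Cons s1 s2 s3 s4 by simp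
qed

lemma omega_perm: "braid_perm \<omega> = Transposition.transpose 1 2 \<circ> Transposition.transpose 0 1"
  unfolding \<omega>_def braid_perm_def by (simp add: comp_assoc numeral_2_eq_2)


lemma l3: "3 \<le> length xs \<Longrightarrow> \<exists>T. xs = xs!0 # xs!1 # xs!2 # T"
  by (cases xs; simp; rename_tac ys; case_tac ys; simp; rename_tac zs; case_tac zs; simp)

lemma l2: "2 \<le> length xs \<Longrightarrow> \<exists>T. xs = xs!0 # xs!1 # T"
  by (cases xs; simp; rename_tac ys; case_tac ys; simp)

lemma conj_comp: "bij g \<Longrightarrow> g \<circ> (p \<circ> q) \<circ> inv g = (g \<circ> p \<circ> inv g) \<circ> (g \<circ> q \<circ> inv g)"
proof -
  assume g: "bij g"
  have "inv g \<circ> g = id" using bij_is_inj[OF g] by (simp add: inv_o_cancel)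
  then show ?thesis by (metis comp_assoc comp_id)
qed

lemma H_pure:
  assumes "set c \<subseteq> X" "braid_word_ok (length c) d" "braid_perm d = id" "p \<in> H (braid_act X op d c)"
  shows "p \<in> H c"
  using H_transport[OF assms(1,2,4)] assms(3) by simp

lemma main_loc:
  assumes conn: "rack_connected X op"
  shows "\<exists>N::nat. \<forall>n\<ge>N. \<forall>c::'a list.
           length c = n \<and> set c \<subseteq> X \<and> rack_generates X op (set c) \<longrightarrow>
             (stab_image X op n c = alt_group n \<or> stab_image X op n c = sym_group n) \<and>
             (quandle X op \<longrightarrow> stab_image X op n c = sym_group n)"
proof -
  obtain K0 where K0: "K0 > 0" "\<forall>x\<in>X. \<forall>p\<in>X. ((\<lambda>z. op z x) ^^ K0) p = p" using exists_K by blast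
  define K where "K = K0 * 2"
  have K2: "K \<ge> 2" using K0(1) unfolding K_def by simp
  have Kp: "\<forall>x\<in>X. \<forall>p\<in>X. ((\<lambda>z. op z x) ^^ K) p = p"
    unfolding K_def using funpow_mult_fix K0(2) by blast
  show ?thesis
  proof (rule exI[of _ "card X * K + 1"], intro allI impI, elim conjE)
    fix n c assume nN: "card X * K + 1 \<le> n" and lc: "length c = n" and cX: "set c \<subseteq> X"
      and gen: "rack_generates X op (set c)"
    obtain y where y: "y \<in> X" "card {k. k < length c \<and> c ! k = y} \<ge> K + 1"
      using pigeon[OF cX] nN lc by auto
    obtain d0 where d0: "braid_word_ok (length c) d0" "\<forall>k<K+1. braid_act X op d0 c ! k = y"
      using gather_aux[OF cX y(2) order_refl] by auto
    define cs where "cs = braid_act X op d0 c"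
    have lcs: "length cs = n" using lc cs_def by simp
    have csX: "set cs \<subseteq> X" using act_set[OF cX d0(1)] cs_def by simp
    have gcs: "rack_generates X op (set cs)" using gen_act[OF cX d0(1) gen] cs_def by simp
    have csy: "\<forall>k<K+1. cs ! k = y" using d0(2) cs_def by simp
    have "K + 1 \<le> n"
    proof -
      have "{k. k < length c \<and> c ! k = y} \<subseteq> {..<n}" using lc by auto
      hence "card {k. k < length c \<and> c ! k = y} \<le> n" using card_mono[of "{..<n}"] by fastforce
      thus ?thesis using y(2) by simp
    qed
    hence Kn: "K < n" by simp
    define rest where "rest = drop K cs"
    have lrest: "length rest = n - K" using lcs rest_def by simp
    have cs_eq: "cs = replicate K y @ rest"
    proof -
      have "take K cs = replicate K y"
        by (rule nth_equalityI) (use lcs Kn csy in auto)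
      then show ?thesis unfolding rest_def by (metis append_take_drop_id)
    qed
    have restX: "set rest \<subseteq> X" using csX cs_eq by auto
    have y_rest: "y \<in> set rest"
    proof -
      have "rest ! 0 = cs ! K" unfolding rest_def using Kn lcs by simp
      moreover have "0 < length rest" using lrest Kn by simp
      ultimately show ?thesis using csy nth_mem by force
    qed
    have set_eq: "set cs = set rest" using cs_eq y_rest K2 by auto
    have reach: "\<forall>a\<in>X. \<forall>b\<in>X. (a, b) \<in> (Ed (set rest))\<^sup>*"
      using all_reach[OF Kp _ restX _ conn] K2 gcs set_eq by simp
    have nK: "K + length rest = n" using lrest Kn by simp
    have D: "\<exists>\<delta>. braid_word_ok n \<delta> \<and> braid_perm \<delta> = id \<and>
               braid_act X op \<delta> cs ! 0 = braid_act X op \<delta> cs ! s \<and>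
               braid_act X op \<delta> cs ! 1 = braid_act X op \<delta> cs ! s" if s: "s < n" for s
    proof (cases "s \<le> K")
      case True
      show ?thesis
        by (rule exI[of _ "[]"]) (use True csy K2 in \<open>simp add: braid_word_ok_def braid_perm_def\<close>)
    next
      case False
      define b where "b = cs ! s"
      have bX: "b \<in> X" using csX s lcs b_def nth_mem by blast
      obtain \<delta> where \<delta>: "braid_word_ok (K + length rest) \<delta>" "braid_perm \<delta> = id"
        "braid_act X op \<delta> (replicate K y @ rest) = replicate K b @ rest"
        using res_star[OF Kp restX y(1)] reach y(1) bX by blast
      have e: "braid_act X op \<delta> cs = replicate K b @ rest" using \<delta>(3) cs_eq by simp
      have "(replicate K b @ rest) ! s = rest ! (s - K)" using False by (simp add: nth_append)
      also have "\<dots> = cs ! s" unfolding rest_def using False s lcs by simp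
      finally have "(replicate K b @ rest) ! s = b" using b_def by simp
      moreover have "(replicate K b @ rest) ! 0 = b" "(replicate K b @ rest) ! 1 = b"
        using K2 by (simp_all add: nth_append)
      ultimately show ?thesis using \<delta>(1,2) e nK by (intro exI[of _ \<delta>]) auto
    qed
    interpret G1: pgrp "H cs" n
    proof
      show "id \<in> H cs" by (rule H_id)
      show "p \<in> H cs \<Longrightarrow> q \<in> H cs \<Longrightarrow> p \<circ> q \<in> H cs" for p q by (rule H_comp)
      show "H cs \<subseteq> sym_group n" using H_sub[of cs] lcs by simp
    qed
    interpret G2: pgrp "H c" n
    proof
      show "id \<in> H c" by (rule H_id)
      show "p \<in> H c \<Longrightarrow> q \<in> H c \<Longrightarrow> p \<circ> q \<in> H c" for p q by (rule H_comp)
      show "H c \<subseteq> sym_group n" using H_sub[of c] lc by simp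
    qed
    define Q where "Q = braid_perm d0"
    have Qp: "Q permutes {0..<n}" unfolding Q_def using bp_permutes d0(1) lc by simp
    have Qb: "bij Q" using permutes_bij[OF Qp] .
    have iQ: "inv Q a < n" if "a < n" for a
      using permutes_in_image[OF permutes_inv[OF Qp]] that by simp
    have QiQ: "Q (inv Q a) = a" for a using Qb by (simp add: bij_is_surj surj_f_inv_f)
    have tQ: "tr a b = Q \<circ> tr (inv Q a) (inv Q b) \<circ> inv Q" for a b
      using trans_conj[OF Qb, of "inv Q a" "inv Q b"] QiQ by simp
    have toc: "p \<in> H cs \<Longrightarrow> Q \<circ> p \<circ> inv Q \<in> H c" for p
      using H_transport[OF cX d0(1)] unfolding Q_def cs_def by blast
    have g3: "\<forall>s. 2 \<le> s \<and> s < n \<longrightarrow> tr 1 s \<circ> tr 0 1 \<in> H cs"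
    proof (intro allI impI, elim conjE)
      fix s assume s2: "2 \<le> s" and s: "s < n"
      obtain \<delta> where \<delta>: "braid_word_ok n \<delta>" "braid_perm \<delta> = id"
        "braid_act X op \<delta> cs ! 0 = braid_act X op \<delta> cs ! s" "braid_act X op \<delta> cs ! 1 = braid_act X op \<delta> cs ! s"
        using D[OF s] by blast
      define d where "d = braid_act X op \<delta> cs"
      have ld: "length d = n" using d_def lcs by simp
      have dX: "set d \<subseteq> X" using act_set[OF csX] \<delta>(1) lcs d_def by simp
      define b where "b = d ! s"
      have bX: "b \<in> X" using dX ld s b_def nth_mem by blast
      define d' where "d' = braid_act X op (mv 2 s) d"
      have ld': "length d' = n" using d'_def ld by simp
      have d'X: "set d' \<subseteq> X" using act_set[OF dX] mv_ok[of s n] s ld d'_def by simp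
      have v: "d' ! 0 = b" "d' ! 1 = b" "d' ! 2 = b"
        using mv_nth[OF s2, of d] s ld \<delta>(3,4) s2 unfolding d'_def b_def d_def by auto
      have "3 \<le> length d'" using ld' s2 s by simp
      then obtain T where d'eq: "d' = b # b # b # T" using l3[of d'] v by metis
      have "braid_act X op \<omega> d' = d'" unfolding d'eq by (rule omega_fix[OF bX])
      moreover have "braid_word_ok (length d') \<omega>" using ld' s2 s unfolding \<omega>_def braid_word_ok_def by auto
      ultimately have "braid_perm \<omega> \<in> H d'" using H_I by blast
      hence "tr 1 2 \<circ> tr 0 1 \<in> H d'" using omega_perm by simp
      hence inH: "braid_perm (mv 2 s) \<circ> (tr 1 2 \<circ> tr 0 1) \<circ> inv (braid_perm (mv 2 s)) \<in> H d"
        using H_transport[OF dX] mv_ok[of s n] s ld d'_def by auto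
      define P where "P = braid_perm (mv 2 s)"
      have Pb: "bij P" unfolding P_def using permutes_bij[OF bp_permutes[OF mv_ok[OF s]]] .
      have "P \<circ> (tr 1 2 \<circ> tr 0 1) \<circ> inv P = tr (P 1) (P 2) \<circ> tr (P 0) (P 1)"
        unfolding conj_comp[OF Pb] trans_conj[OF Pb] ..
      also have "\<dots> = tr 1 s \<circ> tr 0 1" unfolding P_def using mv_perm[OF s2] by simp
      finally have "tr 1 s \<circ> tr 0 1 \<in> H d" using inH P_def by simp
      then show "tr 1 s \<circ> tr 0 1 \<in> H cs" using H_pure[OF csX] \<delta>(1,2) lcs d_def by simp
    qed
    have dbl: "tr a b \<circ> tr c' d \<in> H cs" if "a < n" "b < n" "a \<noteq> b" "c' < n" "d < n" "c' \<noteq> d" for a b c' d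
      using G1.double_tr[OF g3 that] .
    have dblc: "\<forall>a b c' d. a < n \<longrightarrow> b < n \<longrightarrow> a \<noteq> b \<longrightarrow> c' < n \<longrightarrow> d < n \<longrightarrow> c' \<noteq> d \<longrightarrow> tr a b \<circ> tr c' d \<in> H c"
    proof (intro allI impI)
      fix a b c' d assume h: "a < n" "b < n" "a \<noteq> b" "c' < n" "d < n" "c' \<noteq> d"
      have "inv Q a \<noteq> inv Q b" "inv Q c' \<noteq> inv Q d" using h(3,6) QiQ by metis+
      hence "tr (inv Q a) (inv Q b) \<circ> tr (inv Q c') (inv Q d) \<in> H cs" using dbl iQ h by blast
      hence "Q \<circ> (tr (inv Q a) (inv Q b) \<circ> tr (inv Q c') (inv Q d)) \<circ> inv Q \<in> H c" by (rule toc)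
      then show "tr a b \<circ> tr c' d \<in> H c" unfolding conj_comp[OF Qb] tQ[symmetric] .
    qed
    have alt: "alt_group n \<subseteq> H c" using G2.alt_sub[OF dblc] .
    have part1: "H c = alt_group n \<or> H c = sym_group n" using G2.final_alt[OF alt] .
    have part2: "H c = sym_group n" if qd: "quandle X op"
    proof -
      have t1: "\<forall>s. 0 < s \<and> s < n \<longrightarrow> tr 0 s \<in> H cs"
      proof (intro allI impI, elim conjE)
        fix s assume s1: "0 < s" and s: "s < n"
        obtain \<delta> where \<delta>: "braid_word_ok n \<delta>" "braid_perm \<delta> = id"
          "braid_act X op \<delta> cs ! 0 = braid_act X op \<delta> cs ! s" "braid_act X op \<delta> cs ! 1 = braid_act X op \<delta> cs ! s"
          using D[OF s] by blast
        define d where "d = braid_act X op \<delta> cs"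
        have ld: "length d = n" using d_def lcs by simp
        have dX: "set d \<subseteq> X" using act_set[OF csX] \<delta>(1) lcs d_def by simp
        define b where "b = d ! s"
        have bX: "b \<in> X" using dX ld s b_def nth_mem by blast
        have s1': "1 \<le> s" using s1 by simp
        define d' where "d' = braid_act X op (mv 1 s) d"
        have ld': "length d' = n" using d'_def ld by simp
        have v: "d' ! 0 = b" "d' ! 1 = b"
          using mv_nth[OF s1', of d] s ld \<delta>(3) s1 unfolding d'_def b_def d_def by auto
        have "2 \<le> length d'" using ld' s1 s by simp
        then obtain T where d'eq: "d' = b # b # T" using l2[of d'] v by metis
        have "braid_letter_act X op (0, True) ([] @ b # b # T) = [] @ b # op b b # T"
          by (rule act_T') simp
        hence "braid_act X op [(0, True)] d' = d'"
          unfolding d'eq using quandle_idem[OF qd bX] by (simp add: act_Cons)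
        moreover have "braid_word_ok (length d') [(0, True)]" using ld' s1 s unfolding braid_word_ok_def by auto
        ultimately have "braid_perm [(0, True)] \<in> H d'" using H_I by blast
        hence "tr 0 1 \<in> H d'" by (simp add: braid_perm_def)
        hence inH: "braid_perm (mv 1 s) \<circ> tr 0 1 \<circ> inv (braid_perm (mv 1 s)) \<in> H d"
          using H_transport[OF dX] mv_ok[of s n] s ld d'_def by auto
        define P where "P = braid_perm (mv 1 s)"
        have Pb: "bij P" unfolding P_def using permutes_bij[OF bp_permutes[OF mv_ok[OF s]]] .
        have "P \<circ> tr 0 1 \<circ> inv P = tr (P 0) (P 1)" using trans_conj[OF Pb] .
        also have "\<dots> = tr 0 s" unfolding P_def using mv_perm[OF s1'] by simp
        finally have "tr 0 s \<in> H d" using inH P_def by simp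
        then show "tr 0 s \<in> H cs" using H_pure[OF csX] \<delta>(1,2) lcs d_def by simp
      qed
      have "\<forall>a b. a < n \<longrightarrow> b < n \<longrightarrow> tr a b \<in> H c"
      proof (intro allI impI)
        fix a b assume h: "a < n" "b < n"
        have "tr (inv Q a) (inv Q b) \<in> H cs" using G1.all_tr[OF t1] iQ h by blast
        hence "Q \<circ> tr (inv Q a) (inv Q b) \<circ> inv Q \<in> H c" by (rule toc)
        then show "tr a b \<in> H c" unfolding tQ[symmetric] .
      qed
      hence "sym_group n \<subseteq> H c" by (rule G2.sym_sub)
      then show ?thesis using G2.G_sub by blast
    qed
    show "(stab_image X op n c = alt_group n \<or> stab_image X op n c = sym_group n) \<and>
          (quandle X op \<longrightarrow> stab_image X op n c = sym_group n)"
      using part1 part2 lc by blast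
  qed
qed

end

theorem theorem2p4:
  fixes X :: "'a set" and op :: "'a \<Rightarrow> 'a \<Rightarrow> 'a"
  assumes "rack X op" and "finite X" and "rack_connected X op"
  shows "\<exists>N::nat. \<forall>n\<ge>N. \<forall>c::'a list.
           length c = n \<and> set c \<subseteq> X \<and> rack_generates X op (set c) \<longrightarrow>
             (stab_image X op n c = alt_group n \<or> stab_image X op n c = sym_group n) \<and>
             (quandle X op \<longrightarrow> stab_image X op n c = sym_group n)"
proof -
  interpret rk X op using assms(1,2) by unfold_locales
  show ?thesis using main_loc[OF assms(3)] .
qed

end
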